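(* Consider the four-thread trace $T$ (positions 1–14): $acq(y)$ (thread 1), $w(z_1)$ (thread 1), $r(z_1)$ (thread 2), $w(x)$ (thread 2), $w(z_2)$ (thread 2), $r(z_2)$ (thread 1), $rel(y)$ (thread 1), $acq(y)$ (thread 3), $w(z_3)$ (thread 3), $r(z_3)$ (thread 4), $w(x)$ (thread 4), $w(z_4)$ (thread 4), $r(z_4)$ (thread 3), $rel(y)$ (thread 3). Let $e$ be the write on $x$ at position 4 and $f$ the write on $x$ at position 11. Then $(e,f)$ is a potential Lockset-PWR data race pair of $T$ (with $LS(e)=LS(f)=\emptyset$), but $(e,f)\notin\mathcal{P}(T)$. In particular, not every potential Lockset-PWR data race pair is predictable.
   Context: Traces. A trace $T$ is a finite sequence of pairwise distinct events. Each event $e$ belongs to a thread $\mathrm{tid}(e)$ and is one of: a read $r(x)$ or write $w(x)$ of a shared variable $x$, or an acquire $acq(y)$ or release $rel(y)$ of a lock $y$. $\mathrm{pos}_T(e)$ is the index of $e$ in $T$. The projection of $T$ onto thread $i$ is the subsequence of events of thread $i$. A critical section $CS$ on lock $y$ consists of a matching acquire/release pair $acq(CS)$, $rel(CS)$ in thread $i$ together with the events of thread $i$ between them; we write $e \in CS$. The lockset $LS(e)$ of an event $e$ is the set of locks $y$ such that $e$ belongs to some critical section on $y$. Two events are conflicting if they are reads/writes on the same variable, at least one is a write, and they belong to different threads. For a read $e$ on $x$, a write $f$ on $x$ is the last write of $e$ w.r.t. $T$ if $f$ precedes $e$ in $T$ and no other write on $x$ lies strictly between them. Correct reordering. $T'$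 is a correctly reordered prefix of $T$ if $T'$ is a sequence of some of the events of $T$ such that: (i) for every thread $i$, the projection of $T'$ onto $i$ is a prefix of the projection of $T$ onto $i$; (ii) for every read $e$ in $T'$ whose last write w.r.t. $T$ is $f$, $f$ is in $T'$ and is also the last write of $e$ w.r.t. $T'$; (iii) for any two acquires $e_1,e_2$ on the same lock with $e_1$ before $e_2$ in $T'$, the matching release of $e_1$ is in $T'$ and lies strictly between $e_1$ and $e_2$. Predictable races. $(e,f)$ is a predictable data race pair of $T$ if $e,f$ are conflicting events of $T$ and there is a correctly reordered prefix $T'$ of $T$ in which $e$ appears immediately before $f$; if both are writes we additionally require $\mathrm{pos}_T(e)<\mathrm{pos}_T(f)$. $\mathcal{P}(T)$ denotes the set of all such pairs. PWR relation. $<^{PWR}$ is the smallest strict partial order on the events of $T$ such that: (PO) if $\mathrm{tid}(e)=\mathrm{tid}(f)$ and $\mathrm{pos}_T(e)<\mathrm{pos}_T(f)$ then $e<^{PWR}f$; (WRD) if the write $w$ is the last write w.r.t. $T$ of the read $r$ then $w<^{PWR}r$; (ROD) if $CS, CS'$ are distinct critical sections on the same lock, $e\in CS$, $f\in CS'$ and $e<^{PWR}f$, then $rel(CS)<^{PWR}f$. Potential pairs. $(e,f)$ is a potential Lockset-PWR data race pair if $e,f$ are conflicting, $LS(e)\cap LS(f)=\emptyset$, neither $e<^{PWR}f$ nor $f<^{PWR}e$, and either both are writes or $e$ is a read and $f$ a write. *)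

theory Defs
  imports Main
begin

datatype act = Rd nat | Wr nat | Acq nat | Rel nat

text \<open>An event carries a unique identifier (events of a trace are pairwise distinct),
  its thread and its operation.\<close>
datatype event = Ev (eid: nat) (tid: nat) (act: act)

type_synonym trace = "event list"

definition is_read :: "event \<Rightarrow> bool" where
  "is_read e \<longleftrightarrow> (\<exists>x. act e = Rd x)"
definition is_write :: "event \<Rightarrow> bool" where
  "is_write e \<longleftrightarrow> (\<exists>x. act e = Wr x)"
definition is_acq :: "event \<Rightarrow> bool" where
  "is_acq e \<longleftrightarrow> (\<exists>y. act e = Acq y)"

fun var_of :: "act \<Rightarrow> nat option" where
  "var_of (Rd x) = Some x" | "var_of (Wr x) = Some x" | "var_of _ = None"

fun lock_of :: "act \<Rightarrow> nat option" where
  "lock_of (Acq y) = Some y" | "lock_of (Rel y) = Some y" | "lock_of _ = None"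

definition before :: "trace \<Rightarrow> event \<Rightarrow> event \<Rightarrow> bool" where
  "before T e f \<longleftrightarrow> (\<exists>i j. i < j \<and> j < length T \<and> T ! i = e \<and> T ! j = f)"

definition last_write :: "trace \<Rightarrow> event \<Rightarrow> event \<Rightarrow> bool" where
  "last_write T r w \<longleftrightarrow> (\<exists>x. act r = Rd x \<and> act w = Wr x \<and> before T w r \<and>
     \<not> (\<exists>w'. act w' = Wr x \<and> before T w w' \<and> before T w' r))"

definition cs :: "trace \<Rightarrow> event \<Rightarrow> event \<Rightarrow> bool" where
  "cs T a r \<longleftrightarrow> (\<exists>y. act a = Acq y \<and> act r = Rel y \<and> tid a = tid r \<and> before T a r \<and>
     \<not> (\<exists>r'. act r' = Rel y \<and> tid r' = tid a \<and> before T a r' \<and> before T r' r))"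

definition cs_lock :: "event \<Rightarrow> nat" where
  "cs_lock a = the (lock_of (act a))"

definition in_cs :: "trace \<Rightarrow> event \<Rightarrow> event \<Rightarrow> event \<Rightarrow> bool" where
  "in_cs T a r e \<longleftrightarrow> cs T a r \<and> tid e = tid a \<and> e \<in> set T \<and>
     (e = a \<or> before T a e) \<and> (e = r \<or> before T e r)"

definition lockset :: "trace \<Rightarrow> event \<Rightarrow> nat set" where
  "lockset T e = {y. \<exists>a r. in_cs T a r e \<and> cs_lock a = y}"

definition conflicting :: "trace \<Rightarrow> event \<Rightarrow> event \<Rightarrow> bool" where
  "conflicting T e f \<longleftrightarrow> e \<in> set T \<and> f \<in> set T \<and> tid e \<noteq> tid f \<and>
     (\<exists>x. (act e = Wr x \<or> act e = Rd x) \<and> (act f = Wr x \<or> act f = Rd x) \<and>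
          (act e = Wr x \<or> act f = Wr x))"

definition correct_reordered_prefix :: "trace \<Rightarrow> trace \<Rightarrow> bool" where
  "correct_reordered_prefix T T' \<longleftrightarrow> distinct T' \<and> set T' \<subseteq> set T \<and>
     (\<forall>i. \<exists>s. filter (\<lambda>e. tid e = i) T' @ s = filter (\<lambda>e. tid e = i) T) \<and>
     (\<forall>e \<in> set T'. \<forall>f. is_read e \<and> last_write T e f \<longrightarrow> f \<in> set T' \<and> last_write T' e f) \<and>
     (\<forall>e1 e2. is_acq e1 \<and> is_acq e2 \<and> lock_of (act e1) = lock_of (act e2) \<and> before T' e1 e2 \<longrightarrow>
        (\<exists>r. cs T e1 r \<and> r \<in> set T' \<and> before T' e1 r \<and> before T' r e2))"

definition predictable_race :: "trace \<Rightarrow> event \<Rightarrow> event \<Rightarrow> bool" where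
  "predictable_race T e f \<longleftrightarrow> conflicting T e f \<and>
     (\<exists>T'. correct_reordered_prefix T T' \<and>
        (\<exists>i. Suc i < length T' \<and> T' ! i = e \<and> T' ! Suc i = f)) \<and>
     (is_write e \<and> is_write f \<longrightarrow> before T e f)"

definition P :: "trace \<Rightarrow> (event \<times> event) set" where
  "P T = {(e, f). predictable_race T e f}"

inductive pwr :: "trace \<Rightarrow> event \<Rightarrow> event \<Rightarrow> bool" for T where
  PO: "tid e = tid f \<Longrightarrow> before T e f \<Longrightarrow> pwr T e f"
| WRD: "last_write T r w \<Longrightarrow> pwr T w r"
| ROD: "cs T a r \<Longrightarrow> cs T a' r' \<Longrightarrow> (a, r) \<noteq> (a', r') \<Longrightarrow> cs_lock a = cs_lock a' \<Longrightarrow>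
        in_cs T a r e \<Longrightarrow> in_cs T a' r' f \<Longrightarrow> pwr T e f \<Longrightarrow> pwr T r f"
| trans: "pwr T e g \<Longrightarrow> pwr T g f \<Longrightarrow> pwr T e f"

definition potential_lockset_pwr :: "trace \<Rightarrow> event \<Rightarrow> event \<Rightarrow> bool" where
  "potential_lockset_pwr T e f \<longleftrightarrow> conflicting T e f \<and> lockset T e \<inter> lockset T f = {} \<and>
     \<not> pwr T e f \<and> \<not> pwr T f e \<and> ((is_write e \<and> is_write f) \<or> (is_read e \<and> is_write f))"

text \<open>Variables: x = 0, z_k = k. Lock: y = 0. Event ids are the positions 1..14.\<close>
definition ex_trace :: trace where
  "ex_trace =
    [Ev 1 1 (Acq 0), Ev 2 1 (Wr 1), Ev 3 2 (Rd 1), Ev 4 2 (Wr 0), Ev 5 2 (Wr 2),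
     Ev 6 1 (Rd 2), Ev 7 1 (Rel 0),
     Ev 8 3 (Acq 0), Ev 9 3 (Wr 3), Ev 10 4 (Rd 3), Ev 11 4 (Wr 0), Ev 12 4 (Wr 4),
     Ev 13 3 (Rd 4), Ev 14 3 (Rel 0)]"

end

theory Submission
  imports Defs
begin

lemma before_Nil[simp]: "before [] a b = False"
  by (simp add: before_def)

lemma before_Cons[simp]: "before (x#L) a b \<longleftrightarrow> (x = a \<and> b \<in> set L) \<or> before L a b"
proof
  assume "before (x#L) a b"
  then obtain i j where ij: "i < j" "j < length (x#L)" "(x#L) ! i = a" "(x#L) ! j = b"
    unfolding before_def by blast
  show "(x = a \<and> b \<in> set L) \<or> before L a b"
  proof (cases i)
    case 0
    then obtain k where "j = Suc k" using ij by (cases j) auto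
    then show ?thesis using ij 0 by auto
  next
    case (Suc i')
    then obtain k where "j = Suc k" using ij by (cases j) auto
    then show ?thesis using ij Suc unfolding before_def by auto
  qed
next
  assume "(x = a \<and> b \<in> set L) \<or> before L a b"
  then show "before (x#L) a b"
  proof
    assume h: "x = a \<and> b \<in> set L"
    then obtain k where "k < length L" "L ! k = b" by (auto simp: in_set_conv_nth)
    then show ?thesis using h unfolding before_def
      by (intro exI[of _ 0] exI[of _ "Suc k"]) auto
  next
    assume "before L a b"
    then obtain i j where "i < j" "j < length L" "L ! i = a" "L ! j = b"
      unfolding before_def by blast
    then show ?thesis unfolding before_def
      by (intro exI[of _ "Suc i"] exI[of _ "Suc j"]) auto
  qed
qed

lemma before_set: "before L a b \<Longrightarrow> a \<in> set L \<and> b \<in> set L"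
  by (induction L) auto

lemma before_trans: "before L a b \<Longrightarrow> before L b c \<Longrightarrow> distinct L \<Longrightarrow> before L a c"
  by (induction L) (auto dest: before_set)

lemma before_filter: "before (filter Q L) a b \<Longrightarrow> before L a b"
  by (induction L) (auto split: if_splits dest: before_set)

lemma before_prefix: "before (xs @ s) a b \<Longrightarrow> b \<in> set xs \<Longrightarrow> distinct (xs @ s) \<Longrightarrow> before xs a b"
  by (induction xs) (auto dest: before_set)

lemma thread_prefix:
  assumes "filter Q T' @ s = L" "distinct L" "before L a b" "b \<in> set T'" "Q b"
  shows "before T' a b"
proof -
  have "b \<in> set (filter Q T')" using assms by simp
  then have "before (filter Q T') a b" using before_prefix assms by blast
  then show ?thesis by (rule before_filter)
qed

lemma adjacent:
  assumes "distinct L" "Suc i < length L" "L ! i = e" "L ! Suc i = f"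
  shows "\<not> before L f e" "\<not> (before L e g \<and> before L g f)"
proof -
  have ie: "\<And>k. k < length L \<Longrightarrow> L ! k = e \<Longrightarrow> k = i"
    using assms nth_eq_iff_index_eq by fastforce
  have jf: "\<And>k. k < length L \<Longrightarrow> L ! k = f \<Longrightarrow> k = Suc i"
    using assms nth_eq_iff_index_eq by fastforce
  show "\<not> before L f e"
  proof
    assume "before L f e"
    then obtain i1 j1 where "i1 < j1" "j1 < length L" "L ! i1 = f" "L ! j1 = e"
      unfolding before_def by blast
    then show False using ie[of j1] jf[of i1] by simp
  qed
  show "\<not> (before L e g \<and> before L g f)"
  proof
    assume "before L e g \<and> before L g f"
    then obtain i1 k1 k2 j2 where "i1 < k1" "k1 < length L" "L ! i1 = e" "L ! k1 = g"
      "k2 < j2" "j2 < length L" "L ! k2 = g" "L ! j2 = f" unfolding before_def by blast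
    moreover have "k1 = k2" using calculation assms(1) nth_eq_iff_index_eq by fastforce
    ultimately show False using ie[of i1] jf[of j2] by simp
  qed
qed

definition grp :: "nat \<Rightarrow> bool" where "grp t = (t \<le> 2)"

lemma rd_ex: "e \<in> set ex_trace \<Longrightarrow> act e = Rd x \<Longrightarrow>
   (x = 1 \<and> tid e = 2) \<or> (x = 2 \<and> tid e = 1) \<or> (x = 3 \<and> tid e = 4) \<or> (x = 4 \<and> tid e = 3)"
  unfolding ex_trace_def by (simp only: list.set insert_iff empty_iff) (elim disjE; simp)

lemma wr_ex: "e \<in> set ex_trace \<Longrightarrow> act e = Wr x \<Longrightarrow>
   (x = 1 \<and> tid e = 1) \<or> (x = 2 \<and> tid e = 2) \<or> (x = 3 \<and> tid e = 3) \<or> (x = 4 \<and> tid e = 4) \<or> x = 0"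
  unfolding ex_trace_def by (simp only: list.set insert_iff empty_iff) (elim disjE; simp)

lemma pwr_grp: "pwr ex_trace a b \<Longrightarrow> grp (tid a) = grp (tid b)"
proof (induction rule: pwr.induct)
  case (PO e f) then show ?case by simp
next
  case (WRD r w)
  then obtain x where "act r = Rd x" "act w = Wr x" "before ex_trace w r"
    unfolding last_write_def by blast
  then have "r \<in> set ex_trace" "w \<in> set ex_trace" "act r = Rd x" "act w = Wr x"
    using before_set by blast+
  then show ?case using rd_ex[of r x] wr_ex[of w x] by (auto simp: grp_def)
next
  case (ROD a r a' r' e f)
  then show ?case unfolding in_cs_def cs_def by auto
next
  case (trans e g f) then show ?case by simp
qed

lemma acq_ex: "e \<in> set ex_trace \<Longrightarrow> act e = Acq y \<Longrightarrow> tid e = 1 \<or> tid e = 3"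
  unfolding ex_trace_def by (simp only: list.set insert_iff empty_iff) (elim disjE; simp)

lemma ls_empty: "tid e = 2 \<or> tid e = 4 \<Longrightarrow> lockset ex_trace e = {}"
proof -
  assume h: "tid e = 2 \<or> tid e = 4"
  have "\<not> in_cs ex_trace a r e" for a r
  proof
    assume "in_cs ex_trace a r e"
    then obtain y where "act a = Acq y" "before ex_trace a r" "tid e = tid a"
      unfolding in_cs_def cs_def by blast
    then show False using acq_ex[of a y] before_set h by fastforce
  qed
  then show ?thesis unfolding lockset_def by blast
qed

lemma pot: "potential_lockset_pwr ex_trace (Ev 4 2 (Wr 0)) (Ev 11 4 (Wr 0))"
proof -
  have "\<not> pwr ex_trace (Ev 4 2 (Wr 0)) (Ev 11 4 (Wr 0))"
    using pwr_grp by (fastforce simp: grp_def)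
  moreover have "\<not> pwr ex_trace (Ev 11 4 (Wr 0)) (Ev 4 2 (Wr 0))"
    using pwr_grp by (fastforce simp: grp_def)
  moreover have "lockset ex_trace (Ev 4 2 (Wr 0)) = {}" "lockset ex_trace (Ev 11 4 (Wr 0)) = {}"
    by (simp_all add: ls_empty)
  moreover have "conflicting ex_trace (Ev 4 2 (Wr 0)) (Ev 11 4 (Wr 0))"
    by (simp add: conflicting_def ex_trace_def)
  ultimately show ?thesis unfolding potential_lockset_pwr_def
    by (simp add: is_write_def)
qed

lemma lin: "a \<in> set L \<Longrightarrow> b \<in> set L \<Longrightarrow> a \<noteq> b \<Longrightarrow> before L a b \<or> before L b a"
proof -
  assume "a \<in> set L" "b \<in> set L" "a \<noteq> b"
  then obtain i j where "i < length L" "L ! i = a" "j < length L" "L ! j = b"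
    by (auto simp: in_set_conv_nth)
  moreover have "i \<noteq> j" using calculation \<open>a \<noteq> b\<close> by auto
  ultimately show ?thesis unfolding before_def
    by (cases "i < j") (blast, metis linorder_neqE_nat)
qed

lemma wr_uniq: "e \<in> set ex_trace \<Longrightarrow> act e = Wr x \<Longrightarrow>
   (x = 1 \<and> e = Ev 2 1 (Wr 1)) \<or> (x = 2 \<and> e = Ev 5 2 (Wr 2)) \<or> (x = 3 \<and> e = Ev 9 3 (Wr 3)) \<or> (x = 4 \<and> e = Ev 12 4 (Wr 4)) \<or> x = 0"
  unfolding ex_trace_def by (simp only: list.set insert_iff empty_iff) (elim disjE; simp)

lemma rel_uniq: "e \<in> set ex_trace \<Longrightarrow> act e = Rel y \<Longrightarrow> e = Ev 7 1 (Rel 0) \<or> e = Ev 14 3 (Rel 0)"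
  unfolding ex_trace_def by (simp only: list.set insert_iff empty_iff) (elim disjE; simp)

lemma before_irrefl: "distinct L \<Longrightarrow> \<not> before L a a"
  unfolding before_def using nth_eq_iff_index_eq by fastforce

lemma dex: "distinct ex_trace" by (simp add: ex_trace_def)

lemma lw_gen: "act r = Rd x \<Longrightarrow> act w = Wr x \<Longrightarrow> before ex_trace w r \<Longrightarrow> x \<noteq> 0 \<Longrightarrow> last_write ex_trace r w"
proof -
  assume a: "act r = Rd x" "act w = Wr x" "before ex_trace w r" "x \<noteq> 0"
  have "w' = w" if "act w' = Wr x" "before ex_trace w w'" for w'
  proof -
    have "w' \<in> set ex_trace" "w \<in> set ex_trace" using that a before_set by blast+
    then show ?thesis using wr_uniq[of w' x] wr_uniq[of w x] that a by auto
  qed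
  then show ?thesis unfolding last_write_def using a before_irrefl[OF dex] by blast
qed

lemma lw3: "last_write ex_trace (Ev 3 2 (Rd 1)) (Ev 2 1 (Wr 1))"
  by (rule lw_gen[where x=1]) (simp_all add: ex_trace_def)

lemma lw6: "last_write ex_trace (Ev 6 1 (Rd 2)) (Ev 5 2 (Wr 2))"
  by (rule lw_gen[where x=2]) (simp_all add: ex_trace_def)

lemma lw10: "last_write ex_trace (Ev 10 4 (Rd 3)) (Ev 9 3 (Wr 3))"
  by (rule lw_gen[where x=3]) (simp_all add: ex_trace_def)

lemma lw13: "last_write ex_trace (Ev 13 3 (Rd 4)) (Ev 12 4 (Wr 4))"
  by (rule lw_gen[where x=4]) (simp_all add: ex_trace_def)

lemma cs1: "cs ex_trace (Ev 1 1 (Acq 0)) r \<Longrightarrow> r = (Ev 7 1 (Rel 0))"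
  unfolding cs_def using rel_uniq[of r] before_set by fastforce

lemma cs8: "cs ex_trace (Ev 8 3 (Acq 0)) r \<Longrightarrow> r = (Ev 14 3 (Rel 0))"
  unfolding cs_def using rel_uniq[of r] before_set by fastforce

lemma notP: "\<not> predictable_race ex_trace (Ev 4 2 (Wr 0)) (Ev 11 4 (Wr 0))"
proof
  assume "predictable_race ex_trace (Ev 4 2 (Wr 0)) (Ev 11 4 (Wr 0))"
  then obtain T' i where crp: "correct_reordered_prefix ex_trace T'" and adj: "Suc i < length T'" "T' ! i = (Ev 4 2 (Wr 0))" "T' ! Suc i = (Ev 11 4 (Wr 0))"
    unfolding predictable_race_def by blast
  have dist: "distinct T'" and thr: "\<And>t. \<exists>s. filter (\<lambda>e. tid e = t) T' @ s = filter (\<lambda>e. tid e = t) ex_trace"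
    and rw: "\<And>e f. e \<in> set T' \<Longrightarrow> is_read e \<Longrightarrow> last_write ex_trace e f \<Longrightarrow> f \<in> set T' \<and> last_write T' e f"
    and lk: "\<And>e1 e2. is_acq e1 \<Longrightarrow> is_acq e2 \<Longrightarrow> lock_of (act e1) = lock_of (act e2) \<Longrightarrow> before T' e1 e2 \<Longrightarrow> (\<exists>r. cs ex_trace e1 r \<and> r \<in> set T' \<and> before T' e1 r \<and> before T' r e2)"
    using crp unfolding correct_reordered_prefix_def by blast+
  have rdw: "\<And>e f. e \<in> set T' \<Longrightarrow> is_read e \<Longrightarrow> last_write ex_trace e f \<Longrightarrow> before T' f e"
    using rw unfolding last_write_def by blast
  obtain s1 where f1: "filter (\<lambda>e. tid e = 1) T' @ s1 = [(Ev 1 1 (Acq 0)), (Ev 2 1 (Wr 1)), (Ev 6 1 (Rd 2)), (Ev 7 1 (Rel 0))]"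
    using thr[of 1] by (auto simp: ex_trace_def)
  have t1: "\<And>a b. before [(Ev 1 1 (Acq 0)), (Ev 2 1 (Wr 1)), (Ev 6 1 (Rd 2)), (Ev 7 1 (Rel 0))] a b \<Longrightarrow> b \<in> set T' \<Longrightarrow> tid b = 1 \<Longrightarrow> before T' a b"
    using thread_prefix[OF f1] by simp
  obtain s2 where f2: "filter (\<lambda>e. tid e = 2) T' @ s2 = [(Ev 3 2 (Rd 1)), (Ev 4 2 (Wr 0)), (Ev 5 2 (Wr 2))]"
    using thr[of 2] by (auto simp: ex_trace_def)
  have t2: "\<And>a b. before [(Ev 3 2 (Rd 1)), (Ev 4 2 (Wr 0)), (Ev 5 2 (Wr 2))] a b \<Longrightarrow> b \<in> set T' \<Longrightarrow> tid b = 2 \<Longrightarrow> before T' a b"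
    using thread_prefix[OF f2] by simp
  obtain s3 where f3: "filter (\<lambda>e. tid e = 3) T' @ s3 = [(Ev 8 3 (Acq 0)), (Ev 9 3 (Wr 3)), (Ev 13 3 (Rd 4)), (Ev 14 3 (Rel 0))]"
    using thr[of 3] by (auto simp: ex_trace_def)
  have t3: "\<And>a b. before [(Ev 8 3 (Acq 0)), (Ev 9 3 (Wr 3)), (Ev 13 3 (Rd 4)), (Ev 14 3 (Rel 0))] a b \<Longrightarrow> b \<in> set T' \<Longrightarrow> tid b = 3 \<Longrightarrow> before T' a b"
    using thread_prefix[OF f3] by simp
  obtain s4 where f4: "filter (\<lambda>e. tid e = 4) T' @ s4 = [(Ev 10 4 (Rd 3)), (Ev 11 4 (Wr 0)), (Ev 12 4 (Wr 4))]"
    using thr[of 4] by (auto simp: ex_trace_def)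
  have t4: "\<And>a b. before [(Ev 10 4 (Rd 3)), (Ev 11 4 (Wr 0)), (Ev 12 4 (Wr 4))] a b \<Longrightarrow> b \<in> set T' \<Longrightarrow> tid b = 4 \<Longrightarrow> before T' a b"
    using thread_prefix[OF f4] by simp
  have m4: "(Ev 4 2 (Wr 0)) \<in> set T'" using adj nth_mem by (metis Suc_lessD)
  have m11: "(Ev 11 4 (Wr 0)) \<in> set T'" using adj nth_mem by metis
  have b34: "before T' (Ev 3 2 (Rd 1)) (Ev 4 2 (Wr 0))" using t2 m4 by simp
  have m3: "(Ev 3 2 (Rd 1)) \<in> set T'" using b34 before_set by blast
  have b23: "before T' (Ev 2 1 (Wr 1)) (Ev 3 2 (Rd 1))" using rdw[OF m3 _ lw3] by (simp add: is_read_def)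
  have m2: "(Ev 2 1 (Wr 1)) \<in> set T'" using b23 before_set by blast
  have b12: "before T' (Ev 1 1 (Acq 0)) (Ev 2 1 (Wr 1))" using t1 m2 by simp
  have m1: "(Ev 1 1 (Acq 0)) \<in> set T'" using b12 before_set by blast
  have b1011: "before T' (Ev 10 4 (Rd 3)) (Ev 11 4 (Wr 0))" using t4 m11 by simp
  have m10: "(Ev 10 4 (Rd 3)) \<in> set T'" using b1011 before_set by blast
  have b910: "before T' (Ev 9 3 (Wr 3)) (Ev 10 4 (Rd 3))" using rdw[OF m10 _ lw10] by (simp add: is_read_def)
  have m9: "(Ev 9 3 (Wr 3)) \<in> set T'" using b910 before_set by blast
  have b89: "before T' (Ev 8 3 (Acq 0)) (Ev 9 3 (Wr 3))" using t3 m9 by simp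
  have m8: "(Ev 8 3 (Acq 0)) \<in> set T'" using b89 before_set by blast
  have lk18: "is_acq (Ev 1 1 (Acq 0))" "is_acq (Ev 8 3 (Acq 0))" "lock_of (act (Ev 1 1 (Acq 0))) = lock_of (act (Ev 8 3 (Acq 0)))" by (simp_all add: is_acq_def)
  from lin[OF m1 m8] have "before T' (Ev 1 1 (Acq 0)) (Ev 8 3 (Acq 0)) \<or> before T' (Ev 8 3 (Acq 0)) (Ev 1 1 (Acq 0))" by simp
  then show False
  proof
    assume h: "before T' (Ev 1 1 (Acq 0)) (Ev 8 3 (Acq 0))"
    then obtain r where "cs ex_trace (Ev 1 1 (Acq 0)) r" "r \<in> set T'" "before T' r (Ev 8 3 (Acq 0))" using lk[OF lk18 h] by blast
    then have m7: "(Ev 7 1 (Rel 0)) \<in> set T'" and b78: "before T' (Ev 7 1 (Rel 0)) (Ev 8 3 (Acq 0))" using cs1 by blast+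
    have b67: "before T' (Ev 6 1 (Rd 2)) (Ev 7 1 (Rel 0))" using t1 m7 by simp
    have m6: "(Ev 6 1 (Rd 2)) \<in> set T'" using b67 before_set by blast
    have b56: "before T' (Ev 5 2 (Wr 2)) (Ev 6 1 (Rd 2))" using rdw[OF m6 _ lw6] by (simp add: is_read_def)
    have m5: "(Ev 5 2 (Wr 2)) \<in> set T'" using b56 before_set by blast
    have b45: "before T' (Ev 4 2 (Wr 0)) (Ev 5 2 (Wr 2))" using t2 m5 by simp
    have "before T' (Ev 5 2 (Wr 2)) (Ev 11 4 (Wr 0))" using b56 b67 b78 b89 b910 b1011 dist by (meson before_trans)
    then show False using adjacent(2)[OF dist adj] b45 by blast
  next
    assume h: "before T' (Ev 8 3 (Acq 0)) (Ev 1 1 (Acq 0))"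
    then obtain r where "cs ex_trace (Ev 8 3 (Acq 0)) r" "r \<in> set T'" "before T' r (Ev 1 1 (Acq 0))" using lk[OF lk18(2,1) lk18(3)[symmetric] h] by blast
    then have m14: "(Ev 14 3 (Rel 0)) \<in> set T'" and b141: "before T' (Ev 14 3 (Rel 0)) (Ev 1 1 (Acq 0))" using cs8 by blast+
    have b1314: "before T' (Ev 13 3 (Rd 4)) (Ev 14 3 (Rel 0))" using t3 m14 by simp
    have m13: "(Ev 13 3 (Rd 4)) \<in> set T'" using b1314 before_set by blast
    have b1213: "before T' (Ev 12 4 (Wr 4)) (Ev 13 3 (Rd 4))" using rdw[OF m13 _ lw13] by (simp add: is_read_def)
    have m12: "(Ev 12 4 (Wr 4)) \<in> set T'" using b1213 before_set by blast
    have b1112: "before T' (Ev 11 4 (Wr 0)) (Ev 12 4 (Wr 4))" using t4 m12 by simp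
    have "before T' (Ev 11 4 (Wr 0)) (Ev 4 2 (Wr 0))" using b1112 b1213 b1314 b141 b12 b23 b34 dist by (meson before_trans)
    then show False using adjacent(1)[OF dist adj] by blast
  qed
qed

theorem mainTheorem4:
  shows "potential_lockset_pwr ex_trace (Ev 4 2 (Wr 0)) (Ev 11 4 (Wr 0))
       \<and> lockset ex_trace (Ev 4 2 (Wr 0)) = {} \<and> lockset ex_trace (Ev 11 4 (Wr 0)) = {}
       \<and> (Ev 4 2 (Wr 0), Ev 11 4 (Wr 0)) \<notin> P ex_trace
       \<and> \<not> (\<forall>T e f. distinct T \<and> potential_lockset_pwr T e f \<longrightarrow> (e, f) \<in> P T)"
proof -
  have d: "distinct ex_trace" by (simp add: ex_trace_def)
  have np: "(Ev 4 2 (Wr 0), Ev 11 4 (Wr 0)) \<notin> P ex_trace" using notP by (simp add: P_def)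
  show ?thesis using pot np d by (auto simp: ls_empty)
qed

end
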